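(* Let $s$ and $A$ be fixed positive integers, and let $\beta$ be the maximal exponent in the prime factorization of $A$ (with $\beta=0$ if $A=1$). Let $x$ and $n$ be positive integers such that $x$ divides $A^n(n!)^s$. Then for every positive integer $a$, $$x\leq \bigl(a\,\omega(x)+1\bigr)^{n\omega(x)(\beta+s)}\,(An^s)^{n\left(\beta\omega(x)+\frac{s}{a}\right)}.$$ In particular, if $A=1$, then $x\leq (a\omega(x)+1)^{n\omega(x)s}(n^s)^{ns/a}$.
   Context: For a positive integer $x$, $\omega(x)$ denotes the number of distinct prime factors of $x$. *)

theory Defs
  imports "HOL-Analysis.Analysis" "HOL-Computational_Algebra.Primes"
begin

definition omega :: "nat \<Rightarrow> nat" where
  "omega x = card (prime_factors x)"

definition max_exp :: "nat \<Rightarrow> nat" where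
  "max_exp A = (if prime_factors A = {} then 0 else Max ((\<lambda>p. multiplicity p A) ` prime_factors A))"

end

theory Submission imports Defs begin
lemma fact_split:
  fixes p :: nat assumes p: "prime p"
  shows "\<exists>r. \<not> p dvd r \<and> fact n = p ^ (n div p) * fact (n div p) * r"
proof (induction n)
  case 0 then show ?case by (intro exI[of _ 1]) (use p in auto)
next
  case (Suc n)
  then obtain r where r: "\<not> p dvd r" "fact n = p ^ (n div p) * fact (n div p) * r" by blast
  show ?case
  proof (cases "p dvd Suc n")
    case True
    have p1: "p > 1" using p prime_gt_1_nat by blast
    obtain m where m: "Suc n = p * m" using True by blast
    have m1: "m \<ge> 1" using m by (cases m) auto
    obtain m' where m': "m = Suc m'" using m1 by (cases m) auto
    have n_eq: "n = (p - 1) + p * (m - 1)" using m m' p1 by simp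
    have "n div p = ((p - 1) + (m - 1) * p) div p" using n_eq by (simp add: mult.commute)
    also have "\<dots> = (m - 1) + (p - 1) div p" using p1 by (simp only: div_mult_self1 [of p])
    also have "(p - 1) div p = 0" using p1 by simp
    finally have "n div p = m - 1" by simp
    then have q: "Suc n div p = Suc (n div p)" using m m1 p1 by simp
    have e: "Suc n = p * Suc (n div p)" using True q by (metis dvd_mult_div_cancel)
    have "fact (Suc n) = Suc n * fact n" by simp
    also have "\<dots> = p * Suc (n div p) * (p ^ (n div p) * fact (n div p) * r)" using e r(2) by simp
    also have "\<dots> = p ^ Suc (n div p) * fact (Suc (n div p)) * r" by (simp add: algebra_simps)
    finally have "fact (Suc n) = p ^ Suc (n div p) * fact (Suc (n div p)) * r" .
    then show ?thesis using r(1) q by auto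
  next
    case False
    have q: "Suc n div p = n div p" using False
      using False by (auto simp: div_Suc dvd_eq_mod_eq_0 split: if_splits)
    have "fact (Suc n) = p ^ (n div p) * fact (n div p) * (Suc n * r)"
      using r(2) by (simp add: algebra_simps)
    moreover have "\<not> p dvd Suc n * r" using False r(1) p prime_dvd_mult_iff by blast
    ultimately show ?thesis using q by metis
  qed
qed

lemma legendre_bound:
  fixes p :: nat assumes p: "prime p"
  shows "(p - 1) * multiplicity p (fact n :: nat) \<le> n"
proof (induction n rule: less_induct)
  case (less n)
  show ?case
  proof (cases "n = 0")
    case True then show ?thesis by simp
  next
    case False
    have p1: "p > 1" using p prime_gt_1_nat by blast
    let ?q = "n div p"
    obtain r where r: "\<not> p dvd r" "fact n = p ^ ?q * fact ?q * r" using fact_split[OF p] by blast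
    have "multiplicity p (fact n :: nat) = ?q + multiplicity p (fact ?q :: nat)"
    proof -
      have r0: "r \<noteq> 0" using r(1) by (metis dvd_0_right)
      have "multiplicity p (fact n :: nat) = multiplicity p (p ^ ?q * (fact ?q * r))" using r(2) by (simp add: mult.assoc)
      also have "\<dots> = ?q + multiplicity p (fact ?q * r)"
        using p r0 by (simp add: prime_elem_multiplicity_mult_distrib multiplicity_prime_power)
      also have "multiplicity p (fact ?q * r) = multiplicity p (fact ?q :: nat)"
        using p r0 r(1) by (simp add: prime_elem_multiplicity_mult_distrib not_dvd_imp_multiplicity_0)
      finally show ?thesis .
    qed
    moreover have "?q < n" using False p1 by simp
    then have "(p - 1) * multiplicity p (fact ?q :: nat) \<le> ?q" using less by blast
    ultimately have "(p - 1) * multiplicity p (fact n :: nat) \<le> (p - 1) * ?q + ?q"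
      by (simp add: algebra_simps)
    also have "\<dots> = p * ?q" using p1 by (cases p) auto
    also have "\<dots> \<le> n" by simp
    finally show ?thesis .
  qed
qed

lemma pp_bound:
  fixes p A n s x k a :: nat
  assumes p: "prime p" and A: "A > 0" and n: "n > 0" and k: "k \<ge> 1" and a: "a \<ge> 1"
    and x: "x > 0" and dv: "x dvd A ^ n * fact n ^ s"
  shows "real (p ^ multiplicity p x) \<le> real A ^ n * (real (a*k+1) ^ n * real n powr (real n / real (a*k))) ^ s"
proof -
  define v where "v = multiplicity p (fact n :: nat)"
  define C where "C = real (a*k+1) ^ n * real n powr (real n / real (a*k))"
  have p1: "p > 1" using p prime_gt_1_nat by blast
  have fn0: "(fact n :: nat) \<noteq> 0" by simp
  have "multiplicity p x \<le> multiplicity p (A ^ n * fact n ^ s)"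
    using dv A by (intro dvd_imp_multiplicity_le) auto
  also have "\<dots> = n * multiplicity p A + s * v"
    using p A fn0 by (simp add: prime_elem_multiplicity_mult_distrib prime_elem_multiplicity_power_distrib v_def)
  finally have e: "multiplicity p x \<le> n * multiplicity p A + s * v" .
  have "real (p ^ multiplicity p x) \<le> real (p ^ (n * multiplicity p A + s * v))"
    using e p1 by (simp add: power_increasing)
  also have "\<dots> = real (p ^ multiplicity p A) ^ n * real (p ^ v) ^ s"
    by (simp only: power_add power_mult of_nat_mult of_nat_power mult.commute[of n] mult.commute[of s])
  also have "\<dots> \<le> real A ^ n * C ^ s"
  proof (intro mult_mono power_mono)
    have "p ^ multiplicity p A \<le> A" using A by (intro dvd_imp_le multiplicity_dvd) auto
    then show "real (p ^ multiplicity p A) \<le> real A" by linarith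
    have leg: "(p - 1) * v \<le> n" unfolding v_def using legendre_bound[OF p] .
    have n1: "real n \<ge> 1" using n by simp
    have C1: "real (a*k+1) ^ n \<ge> 1" by simp
    have C2: "real n powr (real n / real (a*k)) \<ge> 1" using n1 by (intro ge_one_powr_ge_zero) auto
    show "real (p ^ v) \<le> C"
    proof (cases "v = 0")
      case True then show ?thesis using mult_mono[OF C1 C2] unfolding C_def by simp
    next
      case False
      have "p dvd fact n"
        using False unfolding v_def by (meson not_dvd_imp_multiplicity_0)
      then have pn: "p \<le> n" using p prime_dvd_fact_iff by blast
      show ?thesis
      proof (cases "p \<le> a*k+1")
        case True
        have "1 \<le> p - 1" using p1 by linarith
        then have "v \<le> (p - 1) * v" using mult_le_mono1[of 1 "p - 1" v] by simp
        then have "v \<le> n" using leg by linarith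
        have "real p \<le> real (a*k+1)" using True by (simp only: of_nat_le_iff)
        then have "real (p ^ v) \<le> real (a*k+1) ^ v" by (simp only: of_nat_power) (intro power_mono, auto)
        also have "\<dots> \<le> real (a*k+1) ^ n" using \<open>v \<le> n\<close> by (intro power_increasing) auto
        also have "\<dots> \<le> C" unfolding C_def using mult_left_mono[OF C2, of "real (a*k+1) ^ n"] by simp
        finally show ?thesis .
      next
        case False
        have "a * k * v \<le> (p - 1) * v" using False by (intro mult_le_mono1) auto
        with leg have "a * k * v \<le> n" by linarith
        then have "real (a*k) * real v \<le> real n" by (metis of_nat_le_iff of_nat_mult)
        moreover have "real (a*k) > 0" using a k by simp
        ultimately have vb: "real v \<le> real n / real (a*k)" by (simp add: field_simps)
        have "real p \<le> real n" using pn by (simp only: of_nat_le_iff)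
        then have "real (p ^ v) \<le> real n ^ v" by (simp only: of_nat_power) (intro power_mono, auto)
        also have "\<dots> = real n powr real v" using n by (simp add: powr_realpow)
        also have "\<dots> \<le> real n powr (real n / real (a*k))" using vb n1 by (intro powr_mono) auto
        also have "\<dots> \<le> C" unfolding C_def using mult_right_mono[OF C1, of "real n powr (real n / real (a*k))"] by simp
        finally show ?thesis .
      qed
    qed
  qed auto
  finally show ?thesis unfolding C_def .
qed

theorem lemma2p2:
  fixes s A x n a :: nat
  assumes "s > 0" "A > 0" "x > 0" "n > 0" "a > 0"
    and "x dvd A ^ n * (fact n) ^ s"
  shows "real x \<le> (real a * real (omega x) + 1) powr (real n * real (omega x) * real (max_exp A + s))
            * (real A * real n ^ s) powr (real n * (real (max_exp A) * real (omega x) + real s / real a))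
     \<and> (A = 1 \<longrightarrow> real x \<le> (real a * real (omega x) + 1) powr (real n * real (omega x) * real s)
            * (real n ^ s) powr (real n * real s / real a))"
proof -
  note s = assms(1) and A = assms(2) and x = assms(3) and n = assms(4) and a = assms(5) and dv = assms(6)
  define k where "k = omega x"
  define \<beta> where "\<beta> = max_exp A"
  define X where "X = real a * real k + 1"
  define D where "D = real n powr (real n * real s / real a)"
  have X1: "X \<ge> 1" unfolding X_def by simp
  have n1: "real n \<ge> 1" using n by simp
  have A1: "real A \<ge> 1" using A by simp
  have D1: "D \<ge> 1" unfolding D_def using n1 by (intro ge_one_powr_ge_zero) auto
  have ns1: "real n ^ s \<ge> 1" using n1 by simp
  have key: "real x \<le> real A ^ (n * k) * X ^ (n * s * k) * D"
  proof (cases "k = 0")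
    case True
    then have "prime_factors x = {}" unfolding k_def omega_def by simp
    then have "x = 1" using prime_factorization_nat[OF x] by simp
    moreover have "1 \<le> real A ^ (n * k) * X ^ (n * s * k) * D"
      using True D1 by simp
    ultimately show ?thesis by simp
  next
    case False
    then have k1: "k \<ge> 1" by simp
    define B where "B = real A ^ n * (real (a*k+1) ^ n * real n powr (real n / real (a*k))) ^ s"
    have "real x = real (\<Prod>p\<in>prime_factors x. p ^ multiplicity p x)"
      using prime_factorization_nat[OF x] by simp
    also have "\<dots> = (\<Prod>p\<in>prime_factors x. real (p ^ multiplicity p x))" by simp
    also have "\<dots> \<le> (\<Prod>p\<in>prime_factors x. B)"
      unfolding B_def
      by (intro prod_mono conjI pp_bound[OF _ A n k1 _ x dv]) (use a in auto)
    also have "\<dots> = B ^ k" unfolding k_def omega_def by simp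
    also have "\<dots> = real A ^ (n * k) * X ^ (n * s * k) * D"
    proof -
      have ak: "real (a*k) > 0" using a k1 by simp
      have "(real n powr (real n / real (a*k))) ^ (s * k) = real n powr (real (s*k) * (real n / real (a*k)))"
        using n by (simp add: powr_power)
      also have "real (s*k) * (real n / real (a*k)) = real n * real s / real a"
        using ak k1 by (simp add: field_simps)
      finally have e: "(real n powr (real n / real (a*k))) ^ (s * k) = D" unfolding D_def .
      have "B ^ k = real A ^ (n * k) * real (a*k+1) ^ (n * s * k) * (real n powr (real n / real (a*k))) ^ (s * k)"
        unfolding B_def by (simp add: power_mult_distrib power_mult[symmetric] mult.commute mult.left_commute)
      then show ?thesis using e unfolding X_def by (simp add: add.commute)
    qed
    finally show ?thesis .
  qed
  have XP: "X powr (real n * real k * real s) = X ^ (n * s * k)"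
    using X1 by (simp add: powr_realpow[symmetric] mult.commute mult.left_commute)
  have part1: "real x \<le> X powr (real n * real k * real (\<beta> + s))
            * (real A * real n ^ s) powr (real n * (real \<beta> * real k + real s / real a))"
  proof -
    define E where "E = real n * (real \<beta> * real k + real s / real a)"
    have E0: "E \<ge> 0" unfolding E_def by simp
    have "X ^ (n * s * k) = X powr (real n * real k * real s)" using XP by simp
    also have "\<dots> \<le> X powr (real n * real k * real (\<beta> + s))"
      using X1 by (intro powr_mono) (auto intro!: mult_left_mono)
    finally have t1: "X ^ (n * s * k) \<le> X powr (real n * real k * real (\<beta> + s))" .
    have t2: "real A ^ (n * k) \<le> real A powr E"
    proof (cases "A = 1")
      case True then show ?thesis by simp
    next
      case False
      then have "prime_factors A \<noteq> {}"
        using A by (metis prime_factorization_nat prod.empty)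
      then obtain p where p: "p \<in> prime_factors A" by blast
      have "multiplicity p A \<ge> 1" using p by (simp add: prime_factors_multiplicity)
      also have "multiplicity p A \<le> \<beta>"
        unfolding \<beta>_def max_exp_def using p by (auto intro!: Max_ge)
      finally have b1: "\<beta> \<ge> 1" .
      have "real k \<le> real \<beta> * real k" using b1 by (simp add: mult_le_cancel_right1)
      also have "\<dots> \<le> real \<beta> * real k + real s / real a" by simp
      finally have "real n * real k \<le> E" unfolding E_def by (intro mult_left_mono) auto
      then have "real (n * k) \<le> E" by simp
      then have "real A powr real (n * k) \<le> real A powr E" using A1 by (intro powr_mono) auto
      moreover have "real A powr real (n * k) = real A ^ (n * k)" using A by (intro powr_realpow) simp
      ultimately show ?thesis by simp
    qed
    have t3: "D \<le> (real n ^ s) powr E"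
    proof -
      have "(real n ^ s) powr E = real n powr (real s * E)"
        using n by (simp add: powr_realpow[symmetric] powr_powr)
      moreover have "real n * real s / real a \<le> real s * E"
      proof -
        have "real n * real s / real a \<le> real n * (real s * real s / real a)"
        proof -
          have "s \<le> s * s" using s by simp
          then have "real s \<le> real s * real s" by (metis of_nat_le_iff of_nat_mult)
          then have "real s / real a \<le> real s * real s / real a" by (intro divide_right_mono) auto
          then have "real n * (real s / real a) \<le> real n * (real s * real s / real a)" by (intro mult_left_mono) auto
          then show ?thesis by simp
        qed
        also have "\<dots> \<le> real s * E" unfolding E_def by (simp add: algebra_simps)
        finally show ?thesis .
      qed
      ultimately show ?thesis unfolding D_def using n1 by (simp add: powr_mono)
    qed
    have "real x \<le> real A ^ (n * k) * X ^ (n * s * k) * D" by (rule key)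
    also have "\<dots> \<le> real A powr E * X powr (real n * real k * real (\<beta> + s)) * (real n ^ s) powr E"
      using t1 t2 t3 D1 X1 by (intro mult_mono) auto
    also have "\<dots> = X powr (real n * real k * real (\<beta> + s)) * (real A * real n ^ s) powr E"
      by (simp add: powr_mult)
    finally show ?thesis unfolding E_def .
  qed
  have part2: "A = 1 \<longrightarrow> real x \<le> X powr (real n * real k * real s) * (real n ^ s) powr (real n * real s / real a)"
  proof
    assume A1': "A = 1"
    have "(real n ^ s) powr (real n * real s / real a) = real n powr (real s * (real n * real s / real a))"
      using n by (simp add: powr_realpow[symmetric] powr_powr)
    also have "\<dots> \<ge> D"
    proof -
      have "1 * (real n * real s / real a) \<le> real s * (real n * real s / real a)"
        using s by (intro mult_right_mono) auto
      then show ?thesis unfolding D_def using n1 by (intro powr_mono) auto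
    qed
    finally have d: "D \<le> (real n ^ s) powr (real n * real s / real a)" .
    have "real x \<le> X ^ (n * s * k) * D" using key A1' by simp
    also have "\<dots> \<le> X powr (real n * real k * real s) * (real n ^ s) powr (real n * real s / real a)"
      unfolding XP using d X1 by (intro mult_left_mono) auto
    finally show "real x \<le> X powr (real n * real k * real s) * (real n ^ s) powr (real n * real s / real a)" .
  qed
  show ?thesis using part1 part2 unfolding X_def k_def \<beta>_def by simp
qed
end
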